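(* Let $\pi_1:V_1\to X_1$, $\pi_2:V_2\to X_2$ be diffeological vector pseudo-bundles and $(\tilde f,f)$ a gluing of the former to the latter. Then $\mathcal{S}_1$ is a smooth map $C^\infty_{(f,\tilde f)}(X_1,V_1)\to C^\infty(X_1^f,V_1^{\tilde f})$, for the functional diffeologies (the first with the subset diffeology inside $C^\infty(X_1,V_1)$).
   Context: Diffeological spaces, smooth maps and quotient/subset diffeologies are as usual; $C^\infty(A,B)$ carries the functional diffeology: $q:U\to C^\infty(A,B)$ is a plot iff $(u,u')\mapsto q(u)(p(u'))$ is a plot of $B$ for every plot $p:U'\to A$. A diffeological vector pseudo-bundle $\pi:V\to X$ is a smooth surjection with vector space fibres whose fibrewise addition, scalar multiplication and zero section are smooth. A gluing $(\tilde f,f)$: $f:Y\to X_2$ smooth on $Y\subseteq X_1$, $\tilde f:\pi_1^{-1}(Y)\to V_2$ smooth, $\pi_2\circ\tilde f=f\circ\pi_1$, linear on fibres. A smooth section $s$ of $V_1$ is $(f,\tilde f)$-invariant if $\tilde f(s(y))=\tilde f(s(y'))$ whenever $y,y'\in Y$, $f(y)=f(y')$; $C^\infty_{(f,\tilde f)}(X_1,V_1)$ is the set of these. $X_1^f$ is the quotient of $X_1$ identifying $y,y'\in Y$ with $f(y)=f(y')$, and $V_1^{\tilde f}$ the quotient of $V_1$ identifying $v,v'\in\pi_1^{-1}(Y)$ with $\tilde f(v)=\tilde f(v')$, with quotient diffeologies and projections $\chi_1^f,\chi_1^{\tilde f}$; $\pi_1$ induces a pseudo-bundle $V_1^{\tilde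 f}\to X_1^f$. For $s_1\in C^\infty_{(f,\tilde f)}(X_1,V_1)$, $\mathcal{S}_1(s_1)$ is the unique smooth section of $V_1^{\tilde f}$ with $\mathcal{S}_1(s_1)\circ\chi_1^f=\chi_1^{\tilde f}\circ s_1$. *)

theory Defs
  imports "HOL-Analysis.Analysis" "HOL-Library.FuncSet"
begin

text \<open>R^n is encoded as the coordinate subspace of sequences vanishing from index n on;
  on it the product topology of nat => real is the Euclidean topology.\<close>

definition Rn :: "nat \<Rightarrow> (nat \<Rightarrow> real) set" where
  "Rn n = {x. \<forall>i\<ge>n. x i = 0}"

definition domain :: "nat \<Rightarrow> (nat \<Rightarrow> real) set \<Rightarrow> bool" where
  "domain n U \<longleftrightarrow> U \<subseteq> Rn n \<and> openin (top_of_set (Rn n)) U"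

coinductive smooth_real :: "nat \<Rightarrow> (nat \<Rightarrow> real) set \<Rightarrow> ((nat \<Rightarrow> real) \<Rightarrow> real) \<Rightarrow> bool"
  for n :: nat and U :: "(nat \<Rightarrow> real) set" where
  "continuous_on U g \<Longrightarrow>
   (\<forall>i<n. \<exists>g'. smooth_real n U g' \<and>
      (\<forall>x\<in>U. ((\<lambda>t. g (x(i := x i + t))) has_real_derivative g' x) (at 0)))
   \<Longrightarrow> smooth_real n U g"

definition smooth_map :: "nat \<Rightarrow> (nat \<Rightarrow> real) set \<Rightarrow> nat \<Rightarrow> (nat \<Rightarrow> real) set
    \<Rightarrow> ((nat \<Rightarrow> real) \<Rightarrow> (nat \<Rightarrow> real)) \<Rightarrow> bool" where
  "smooth_map n U m V F \<longleftrightarrow> F ` U \<subseteq> V \<and> (\<forall>j<m. smooth_real n U (\<lambda>x. F x j))"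

type_synonym 'a plots = "nat \<Rightarrow> (nat \<Rightarrow> real) set \<Rightarrow> ((nat \<Rightarrow> real) \<Rightarrow> 'a) \<Rightarrow> bool"

text \<open>P n U p: p restricted to the domain U (open in R^n) is a plot. Plots are functions on U,
  so only the values on U matter.\<close>

definition diffeology :: "'a set \<Rightarrow> 'a plots \<Rightarrow> bool" where
  "diffeology X P \<longleftrightarrow>
     (\<forall>n U p. P n U p \<longrightarrow> domain n U \<and> p ` U \<subseteq> X) \<and>
     (\<forall>n U p q. P n U p \<and> (\<forall>u\<in>U. q u = p u) \<longrightarrow> P n U q) \<and>
     (\<forall>n U c. domain n U \<and> c \<in> X \<longrightarrow> P n U (\<lambda>_. c)) \<and>
     (\<forall>n U p. domain n U \<and> p ` U \<subseteq> X \<and>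
        (\<forall>u\<in>U. \<exists>W. u \<in> W \<and> W \<subseteq> U \<and> domain n W \<and> P n W p) \<longrightarrow> P n U p) \<and>
     (\<forall>n U p m W F. P n U p \<and> domain m W \<and> smooth_map m W n U F \<longrightarrow> P m W (p \<circ> F))"

definition smooth :: "'a set \<Rightarrow> 'a plots \<Rightarrow> 'b set \<Rightarrow> 'b plots \<Rightarrow> ('a \<Rightarrow> 'b) \<Rightarrow> bool" where
  "smooth X P Y Q g \<longleftrightarrow> g ` X \<subseteq> Y \<and> (\<forall>n U p. P n U p \<longrightarrow> Q n U (g \<circ> p))"

definition real_plots :: "real plots" where
  "real_plots n U p \<longleftrightarrow> domain n U \<and> smooth_real n U p"

definition sub_plots :: "'a plots \<Rightarrow> 'a set \<Rightarrow> 'a plots" where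
  "sub_plots P Y n U p \<longleftrightarrow> P n U p \<and> p ` U \<subseteq> Y"

definition prod_plots :: "'a plots \<Rightarrow> 'b plots \<Rightarrow> ('a \<times> 'b) plots" where
  "prod_plots P Q n U p \<longleftrightarrow> P n U (fst \<circ> p) \<and> Q n U (snd \<circ> p)"

definition quot_plots :: "'a set \<Rightarrow> 'a plots \<Rightarrow> ('a \<times> 'a) set \<Rightarrow> 'a set plots" where
  "quot_plots X P r n U p \<longleftrightarrow> domain n U \<and> p ` U \<subseteq> X // r \<and>
     (\<forall>u\<in>U. \<exists>W q. u \<in> W \<and> W \<subseteq> U \<and> domain n W \<and> P n W q \<and> (\<forall>w\<in>W. p w = r `` {q w}))"

definition smooth_maps :: "'a set \<Rightarrow> 'a plots \<Rightarrow> 'b set \<Rightarrow> 'b plots \<Rightarrow> ('a \<Rightarrow> 'b) set" where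
  "smooth_maps X P Y Q = {g. smooth X P Y Q g \<and> g \<in> extensional X}"

text \<open>R^(n+m) = R^n x R^m via the first n and the next m coordinates.\<close>

definition pr1 :: "nat \<Rightarrow> (nat \<Rightarrow> real) \<Rightarrow> (nat \<Rightarrow> real)" where
  "pr1 n z = (\<lambda>i. if i < n then z i else 0)"

definition pr2 :: "nat \<Rightarrow> (nat \<Rightarrow> real) \<Rightarrow> (nat \<Rightarrow> real)" where
  "pr2 n z = (\<lambda>j. z (n + j))"

definition prod_dom :: "nat \<Rightarrow> (nat \<Rightarrow> real) set \<Rightarrow> nat \<Rightarrow> (nat \<Rightarrow> real) set \<Rightarrow> (nat \<Rightarrow> real) set" where
  "prod_dom n U m U' = {z \<in> Rn (n + m). pr1 n z \<in> U \<and> pr2 n z \<in> U'}"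

definition fun_plots :: "'a set \<Rightarrow> 'a plots \<Rightarrow> 'b set \<Rightarrow> 'b plots \<Rightarrow> ('a \<Rightarrow> 'b) plots" where
  "fun_plots X P Y Q n U q \<longleftrightarrow> domain n U \<and> q ` U \<subseteq> smooth_maps X P Y Q \<and>
     (\<forall>m U' p. P m U' p \<longrightarrow>
        Q (n + m) (prod_dom n U m U') (\<lambda>z. q (pr1 n z) (p (pr2 n z))))"

definition fibre_vs :: "'v set \<Rightarrow> ('v \<Rightarrow> 'x) \<Rightarrow> ('v \<Rightarrow> 'v \<Rightarrow> 'v) \<Rightarrow> (real \<Rightarrow> 'v \<Rightarrow> 'v)
    \<Rightarrow> ('x \<Rightarrow> 'v) \<Rightarrow> 'x \<Rightarrow> bool" where
  "fibre_vs V \<pi> add scal zero x \<longleftrightarrow>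
    (let F = {v \<in> V. \<pi> v = x} in
     zero x \<in> F \<and>
     (\<forall>v\<in>F. \<forall>w\<in>F. add v w \<in> F) \<and>
     (\<forall>a. \<forall>v\<in>F. scal a v \<in> F) \<and>
     (\<forall>u\<in>F. \<forall>v\<in>F. \<forall>w\<in>F. add (add u v) w = add u (add v w)) \<and>
     (\<forall>v\<in>F. \<forall>w\<in>F. add v w = add w v) \<and>
     (\<forall>v\<in>F. add v (zero x) = v) \<and>
     (\<forall>v\<in>F. \<exists>w\<in>F. add v w = zero x) \<and>
     (\<forall>a. \<forall>v\<in>F. \<forall>w\<in>F. scal a (add v w) = add (scal a v) (scal a w)) \<and>
     (\<forall>a b. \<forall>v\<in>F. scal (a + b) v = add (scal a v) (scal b v)) \<and>
     (\<forall>a b. \<forall>v\<in>F. scal (a * b) v = scal a (scal b v)) \<and>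
     (\<forall>v\<in>F. scal 1 v = v))"

definition fib_prod :: "'v set \<Rightarrow> ('v \<Rightarrow> 'x) \<Rightarrow> ('v \<times> 'v) set" where
  "fib_prod V \<pi> = {(v, w). v \<in> V \<and> w \<in> V \<and> \<pi> v = \<pi> w}"

definition pseudo_bundle :: "'v set \<Rightarrow> 'v plots \<Rightarrow> 'x set \<Rightarrow> 'x plots \<Rightarrow> ('v \<Rightarrow> 'x)
    \<Rightarrow> ('v \<Rightarrow> 'v \<Rightarrow> 'v) \<Rightarrow> (real \<Rightarrow> 'v \<Rightarrow> 'v) \<Rightarrow> ('x \<Rightarrow> 'v) \<Rightarrow> bool" where
  "pseudo_bundle V DV X DX \<pi> add scal zero \<longleftrightarrow>
     diffeology V DV \<and> diffeology X DX \<and>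
     smooth V DV X DX \<pi> \<and> \<pi> ` V = X \<and>
     (\<forall>x\<in>X. fibre_vs V \<pi> add scal zero x) \<and>
     smooth (fib_prod V \<pi>) (sub_plots (prod_plots DV DV) (fib_prod V \<pi>)) V DV
        (\<lambda>(v, w). add v w) \<and>
     smooth (UNIV \<times> V) (prod_plots real_plots DV) V DV (\<lambda>(a, v). scal a v) \<and>
     smooth X DX V DV zero"

definition gluing :: "'x1 set \<Rightarrow> 'x1 plots \<Rightarrow> 'v1 set \<Rightarrow> 'v1 plots \<Rightarrow> ('v1 \<Rightarrow> 'x1)
    \<Rightarrow> ('v1 \<Rightarrow> 'v1 \<Rightarrow> 'v1) \<Rightarrow> (real \<Rightarrow> 'v1 \<Rightarrow> 'v1)
    \<Rightarrow> 'x2 set \<Rightarrow> 'x2 plots \<Rightarrow> 'v2 set \<Rightarrow> 'v2 plots \<Rightarrow> ('v2 \<Rightarrow> 'x2)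
    \<Rightarrow> ('v2 \<Rightarrow> 'v2 \<Rightarrow> 'v2) \<Rightarrow> (real \<Rightarrow> 'v2 \<Rightarrow> 'v2)
    \<Rightarrow> 'x1 set \<Rightarrow> ('x1 \<Rightarrow> 'x2) \<Rightarrow> ('v1 \<Rightarrow> 'v2) \<Rightarrow> bool" where
  "gluing X1 DX1 V1 DV1 \<pi>1 add1 smult1 X2 DX2 V2 DV2 \<pi>2 add2 smult2 Y f ft \<longleftrightarrow>
     Y \<subseteq> X1 \<and>
     smooth Y (sub_plots DX1 Y) X2 DX2 f \<and>
     smooth (V1 \<inter> \<pi>1 -` Y) (sub_plots DV1 (V1 \<inter> \<pi>1 -` Y)) V2 DV2 ft \<and>
     (\<forall>v \<in> V1 \<inter> \<pi>1 -` Y. \<pi>2 (ft v) = f (\<pi>1 v)) \<and>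
     (\<forall>v \<in> V1 \<inter> \<pi>1 -` Y. \<forall>w \<in> V1. \<pi>1 w = \<pi>1 v \<longrightarrow> ft (add1 v w) = add2 (ft v) (ft w)) \<and>
     (\<forall>a. \<forall>v \<in> V1 \<inter> \<pi>1 -` Y. ft (smult1 a v) = smult2 a (ft v))"

definition inv_sections :: "'x1 set \<Rightarrow> 'x1 plots \<Rightarrow> 'v1 set \<Rightarrow> 'v1 plots \<Rightarrow> ('v1 \<Rightarrow> 'x1)
    \<Rightarrow> 'x1 set \<Rightarrow> ('x1 \<Rightarrow> 'x2) \<Rightarrow> ('v1 \<Rightarrow> 'v2) \<Rightarrow> ('x1 \<Rightarrow> 'v1) set" where
  "inv_sections X1 DX1 V1 DV1 \<pi>1 Y f ft =
     {s \<in> smooth_maps X1 DX1 V1 DV1. (\<forall>x\<in>X1. \<pi>1 (s x) = x) \<and>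
        (\<forall>y\<in>Y. \<forall>y'\<in>Y. f y = f y' \<longrightarrow> ft (s y) = ft (s y'))}"

text \<open>The relations defining X1^f and V1^ft.\<close>

definition relX :: "'x1 set \<Rightarrow> 'x1 set \<Rightarrow> ('x1 \<Rightarrow> 'x2) \<Rightarrow> ('x1 \<times> 'x1) set" where
  "relX X1 Y f = {(x, x'). x \<in> X1 \<and> x' \<in> X1 \<and> (x = x' \<or> (x \<in> Y \<and> x' \<in> Y \<and> f x = f x'))}"

definition relV :: "'v1 set \<Rightarrow> ('v1 \<Rightarrow> 'x1) \<Rightarrow> 'x1 set \<Rightarrow> ('v1 \<Rightarrow> 'v2) \<Rightarrow> ('v1 \<times> 'v1) set" where
  "relV V1 \<pi>1 Y ft = {(v, v'). v \<in> V1 \<and> v' \<in> V1 \<and>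
      (v = v' \<or> (\<pi>1 v \<in> Y \<and> \<pi>1 v' \<in> Y \<and> ft v = ft v'))}"

definition quot_proj :: "('x1 \<times> 'x1) set \<Rightarrow> ('v1 \<Rightarrow> 'x1) \<Rightarrow> 'v1 set \<Rightarrow> 'x1 set" where
  "quot_proj rX \<pi>1 c = rX `` {\<pi>1 (SOME v. v \<in> c)}"

definition S1 :: "'x1 set \<Rightarrow> 'x1 plots \<Rightarrow> 'v1 set \<Rightarrow> 'v1 plots \<Rightarrow> ('v1 \<Rightarrow> 'x1)
    \<Rightarrow> 'x1 set \<Rightarrow> ('x1 \<Rightarrow> 'x2) \<Rightarrow> ('v1 \<Rightarrow> 'v2) \<Rightarrow> ('x1 \<Rightarrow> 'v1) \<Rightarrow> ('x1 set \<Rightarrow> 'v1 set)" where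
  "S1 X1 DX1 V1 DV1 \<pi>1 Y f ft s =
     (THE t. t \<in> smooth_maps (X1 // relX X1 Y f) (quot_plots X1 DX1 (relX X1 Y f))
                             (V1 // relV V1 \<pi>1 Y ft) (quot_plots V1 DV1 (relV V1 \<pi>1 Y ft)) \<and>
        (\<forall>c \<in> X1 // relX X1 Y f. quot_proj (relX X1 Y f) \<pi>1 (t c) = c) \<and>
        (\<forall>x\<in>X1. t (relX X1 Y f `` {x}) = relV V1 \<pi>1 Y ft `` {s x}))"

end

theory Submission
  imports Defs
begin

lemma diff_ax1: "diffeology X P \<Longrightarrow> P n U p \<Longrightarrow> domain n U \<and> p ` U \<subseteq> X"
proof -
  assume d: "diffeology X P" and p: "P n U p"
  from d have "\<forall>n U p. P n U p \<longrightarrow> domain n U \<and> p ` U \<subseteq> X"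
    unfolding diffeology_def by (elim conjE)
  then show ?thesis using p by blast
qed

lemma diff_dom: "diffeology X P \<Longrightarrow> P n U p \<Longrightarrow> domain n U"
  using diff_ax1 by blast

lemma diff_img: "diffeology X P \<Longrightarrow> P n U p \<Longrightarrow> p ` U \<subseteq> X"
  using diff_ax1 by blast

lemma diff_const: "diffeology X P \<Longrightarrow> domain n U \<Longrightarrow> c \<in> X \<Longrightarrow> P n U (\<lambda>_. c)"
proof -
  assume d: "diffeology X P" and U: "domain n U" and c: "c \<in> X"
  from d have "\<forall>n U c. domain n U \<and> c \<in> X \<longrightarrow> P n U (\<lambda>_. c)"
    unfolding diffeology_def by (elim conjE)
  then show ?thesis using U c by blast
qed

lemma equiv_relX: "equiv X1 (relX X1 Y f)"
proof (rule equivI)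
  show "refl_on X1 (relX X1 Y f)" unfolding refl_on_def relX_def by blast
  show "relX X1 Y f \<subseteq> X1 \<times> X1" unfolding relX_def by auto
  show "sym (relX X1 Y f)" unfolding sym_def relX_def by auto
  show "trans (relX X1 Y f)" unfolding trans_def relX_def by fastforce
qed

lemma equiv_relV: "equiv V1 (relV V1 \<pi>1 Y ft)"
proof (rule equivI)
  show "refl_on V1 (relV V1 \<pi>1 Y ft)" unfolding refl_on_def relV_def by blast
  show "relV V1 \<pi>1 Y ft \<subseteq> V1 \<times> V1" unfolding relV_def by auto
  show "sym (relV V1 \<pi>1 Y ft)" unfolding sym_def relV_def by auto
  show "trans (relV V1 \<pi>1 Y ft)" unfolding trans_def relV_def by fastforce
qed

lemma S1_char:
  assumes pb1: "pseudo_bundle V1 DV1 X1 DX1 \<pi>1 add1 smult1 zero1"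
    and gl: "gluing X1 DX1 V1 DV1 \<pi>1 add1 smult1 X2 DX2 V2 DV2 \<pi>2 add2 smult2 Y f ft"
    and s: "s \<in> inv_sections X1 DX1 V1 DV1 \<pi>1 Y f ft"
  shows "S1 X1 DX1 V1 DV1 \<pi>1 Y f ft s \<in> smooth_maps (X1 // relX X1 Y f) (quot_plots X1 DX1 (relX X1 Y f))
                             (V1 // relV V1 \<pi>1 Y ft) (quot_plots V1 DV1 (relV V1 \<pi>1 Y ft))
      \<and> (\<forall>x\<in>X1. S1 X1 DX1 V1 DV1 \<pi>1 Y f ft s (relX X1 Y f `` {x}) = relV V1 \<pi>1 Y ft `` {s x})"
proof -
  let ?rX = "relX X1 Y f" and ?rV = "relV V1 \<pi>1 Y ft"
  have eX: "equiv X1 ?rX" by (rule equiv_relX)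
  have eV: "equiv V1 ?rV" by (rule equiv_relV)
  have piV: "\<pi>1 ` V1 = X1" using pb1 unfolding pseudo_bundle_def by blast
  have gl2: "\<forall>v \<in> V1 \<inter> \<pi>1 -` Y. \<pi>2 (ft v) = f (\<pi>1 v)" and YX: "Y \<subseteq> X1"
    using gl unfolding gluing_def by blast+
  have sm: "s ` X1 \<subseteq> V1" and splot: "\<And>n U p. DX1 n U p \<Longrightarrow> DV1 n U (s \<circ> p)"
    and spi: "\<And>x. x \<in> X1 \<Longrightarrow> \<pi>1 (s x) = x"
    and sinv: "\<And>y y'. y \<in> Y \<Longrightarrow> y' \<in> Y \<Longrightarrow> f y = f y' \<Longrightarrow> ft (s y) = ft (s y')"
    using s unfolding inv_sections_def smooth_maps_def smooth_def by blast+
  have wd: "?rV `` {s x} = ?rV `` {s x'}" if "(x, x') \<in> ?rX" for x x'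
  proof -
    from that have x: "x \<in> X1" "x' \<in> X1" and c: "x = x' \<or> (x \<in> Y \<and> x' \<in> Y \<and> f x = f x')"
      unfolding relX_def by auto
    show ?thesis
    proof (cases "x = x'")
      case False
      with c have "x \<in> Y" "x' \<in> Y" "f x = f x'" by auto
      then have "ft (s x) = ft (s x')" "\<pi>1 (s x) \<in> Y" "\<pi>1 (s x') \<in> Y" "s x \<in> V1" "s x' \<in> V1"
        using x sm spi[of x] spi[of x'] sinv[of x x'] by auto
      then have "(s x, s x') \<in> ?rV" unfolding relV_def by simp
      then show ?thesis using eV by (intro equiv_class_eq)
    qed simp
  qed
  define t where "t = (\<lambda>c. if c \<in> X1 // ?rX then ?rV `` {s (SOME x. x \<in> c)} else undefined)"
  have tv: "t (?rX `` {x}) = ?rV `` {s x}" if x: "x \<in> X1" for x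
  proof -
    have xin: "x \<in> ?rX `` {x}" using eX x by (rule equiv_class_self)
    have "(SOME x'. x' \<in> ?rX `` {x}) \<in> ?rX `` {x}" using xin by (rule someI)
    then have "(x, SOME x'. x' \<in> ?rX `` {x}) \<in> ?rX" by simp
    then have "?rV `` {s x} = ?rV `` {s (SOME x'. x' \<in> ?rX `` {x})}" by (rule wd)
    moreover have "?rX `` {x} \<in> X1 // ?rX" using x by (rule quotientI)
    ultimately show ?thesis unfolding t_def by simp
  qed
  have tQ: "t c \<in> V1 // ?rV" if "c \<in> X1 // ?rX" for c
    using that
  proof (rule quotientE)
    fix x assume "x \<in> X1" "c = ?rX `` {x}"
    then show ?thesis using tv sm by (auto intro: quotientI)
  qed
  let ?P = "\<lambda>t. t \<in> smooth_maps (X1 // ?rX) (quot_plots X1 DX1 ?rX)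
                             (V1 // ?rV) (quot_plots V1 DV1 ?rV) \<and>
        (\<forall>c \<in> X1 // ?rX. quot_proj ?rX \<pi>1 (t c) = c) \<and>
        (\<forall>x\<in>X1. t (?rX `` {x}) = ?rV `` {s x})"
  have Pt: "?P t"
  proof (intro conjI ballI)
    show "t \<in> smooth_maps (X1 // ?rX) (quot_plots X1 DX1 ?rX) (V1 // ?rV) (quot_plots V1 DV1 ?rV)"
      unfolding smooth_maps_def smooth_def
    proof (intro CollectI conjI allI impI)
      show "t ` (X1 // ?rX) \<subseteq> V1 // ?rV" using tQ by blast
      show "t \<in> extensional (X1 // ?rX)" unfolding t_def extensional_def by auto
      fix n U p assume pp: "quot_plots X1 DX1 ?rX n U p"
      show "quot_plots V1 DV1 ?rV n U (t \<circ> p)"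
        unfolding quot_plots_def
      proof (intro conjI ballI)
        show "domain n U" using pp unfolding quot_plots_def by blast
        show "(t \<circ> p) ` U \<subseteq> V1 // ?rV" using pp tQ unfolding quot_plots_def by auto
        fix u assume u: "u \<in> U"
        then obtain W q where W: "u \<in> W" "W \<subseteq> U" "domain n W" "DX1 n W q"
          and pq: "\<forall>w\<in>W. p w = ?rX `` {q w}"
          using pp unfolding quot_plots_def by blast
        have dX1: "diffeology X1 DX1" using pb1 unfolding pseudo_bundle_def by blast
        have qX: "q ` W \<subseteq> X1" using dX1 W(4) by (rule diff_img)
        have eq: "\<forall>w\<in>W. (t \<circ> p) w = ?rV `` {(s \<circ> q) w}"
        proof
          fix w assume w: "w \<in> W"
          then have "q w \<in> X1" using qX by blast
          then show "(t \<circ> p) w = ?rV `` {(s \<circ> q) w}" using pq w tv[of "q w"] by simp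
        qed
        have "DV1 n W (s \<circ> q)" using W(4) by (rule splot)
        then show "\<exists>W q. u \<in> W \<and> W \<subseteq> U \<and> domain n W \<and> DV1 n W q \<and> (\<forall>w\<in>W. (t \<circ> p) w = ?rV `` {q w})"
          using W(1-3) eq by blast
      qed
    qed
  next
    fix c assume c: "c \<in> X1 // ?rX"
    then show "quot_proj ?rX \<pi>1 (t c) = c"
    proof (rule quotientE)
      fix x assume x: "x \<in> X1" and cx: "c = ?rX `` {x}"
      have sx: "s x \<in> V1" using sm x by blast
      define v where "v = (SOME v. v \<in> ?rV `` {s x})"
      have "s x \<in> ?rV `` {s x}" using eV sx by (rule equiv_class_self)
      then have "v \<in> ?rV `` {s x}" unfolding v_def by (rule someI)
      then have sv: "(s x, v) \<in> ?rV" by simp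
      have "(x, \<pi>1 v) \<in> ?rX"
      proof -
        from sv have v: "v \<in> V1" and cc: "s x = v \<or> (\<pi>1 (s x) \<in> Y \<and> \<pi>1 v \<in> Y \<and> ft (s x) = ft v)"
          unfolding relV_def by auto
        have pv: "\<pi>1 v \<in> X1" using v piV by blast
        show ?thesis
        proof (cases "s x = v")
          case True then show ?thesis using x spi unfolding relX_def by auto
        next
          case False
          with cc have h: "\<pi>1 (s x) \<in> Y" "\<pi>1 v \<in> Y" "ft (s x) = ft v" by auto
          have "f (\<pi>1 v) = \<pi>2 (ft v)" using gl2 v h by auto
          also have "\<dots> = \<pi>2 (ft (s x))" using h by simp
          also have "\<dots> = f (\<pi>1 (s x))" using gl2 sx h(1) by blast
          finally show ?thesis using x pv h spi unfolding relX_def by auto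
        qed
      qed
      then have "?rX `` {x} = ?rX `` {\<pi>1 v}" using eX by (intro equiv_class_eq)
      then show ?thesis unfolding quot_proj_def cx tv[OF x] v_def by simp
    qed
  next
    fix x assume "x \<in> X1" then show "t (?rX `` {x}) = ?rV `` {s x}" by (rule tv)
  qed
  have uniq: "t' = t" if "?P t'" for t'
  proof (rule extensionalityI)
    show "t' \<in> extensional (X1 // ?rX)" using that unfolding smooth_maps_def by blast
    show "t \<in> extensional (X1 // ?rX)" unfolding t_def extensional_def by auto
    fix c assume "c \<in> X1 // ?rX"
    then show "t' c = t c"
    proof (rule quotientE)
      fix x assume "x \<in> X1" "c = ?rX `` {x}"
      then show ?thesis using that tv[of x] by simp
    qed
  qed
  have St: "S1 X1 DX1 V1 DV1 \<pi>1 Y f ft s = t"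
    unfolding S1_def using Pt uniq by (rule the_equality)
  show ?thesis unfolding St using Pt by (elim conjE) (intro conjI; assumption)
qed

theorem theorem2p15:
  fixes X1 :: "'x1 set" and DX1 :: "'x1 plots" and V1 :: "'v1 set" and DV1 :: "'v1 plots"
    and \<pi>1 :: "'v1 \<Rightarrow> 'x1" and add1 :: "'v1 \<Rightarrow> 'v1 \<Rightarrow> 'v1" and smult1 :: "real \<Rightarrow> 'v1 \<Rightarrow> 'v1"
    and zero1 :: "'x1 \<Rightarrow> 'v1"
    and X2 :: "'x2 set" and DX2 :: "'x2 plots" and V2 :: "'v2 set" and DV2 :: "'v2 plots"
    and \<pi>2 :: "'v2 \<Rightarrow> 'x2" and add2 :: "'v2 \<Rightarrow> 'v2 \<Rightarrow> 'v2" and smult2 :: "real \<Rightarrow> 'v2 \<Rightarrow> 'v2"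
    and zero2 :: "'x2 \<Rightarrow> 'v2"
    and Y :: "'x1 set" and f :: "'x1 \<Rightarrow> 'x2" and ft :: "'v1 \<Rightarrow> 'v2"
  assumes "pseudo_bundle V1 DV1 X1 DX1 \<pi>1 add1 smult1 zero1"
    and "pseudo_bundle V2 DV2 X2 DX2 \<pi>2 add2 smult2 zero2"
    and "gluing X1 DX1 V1 DV1 \<pi>1 add1 smult1 X2 DX2 V2 DV2 \<pi>2 add2 smult2 Y f ft"
  shows "smooth (inv_sections X1 DX1 V1 DV1 \<pi>1 Y f ft)
                (sub_plots (fun_plots X1 DX1 V1 DV1) (inv_sections X1 DX1 V1 DV1 \<pi>1 Y f ft))
                (smooth_maps (X1 // relX X1 Y f) (quot_plots X1 DX1 (relX X1 Y f))
                             (V1 // relV V1 \<pi>1 Y ft) (quot_plots V1 DV1 (relV V1 \<pi>1 Y ft)))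
                (fun_plots (X1 // relX X1 Y f) (quot_plots X1 DX1 (relX X1 Y f))
                           (V1 // relV V1 \<pi>1 Y ft) (quot_plots V1 DV1 (relV V1 \<pi>1 Y ft)))
                (S1 X1 DX1 V1 DV1 \<pi>1 Y f ft)"
proof -
  let ?rX = "relX X1 Y f" and ?rV = "relV V1 \<pi>1 Y ft"
  let ?IS = "inv_sections X1 DX1 V1 DV1 \<pi>1 Y f ft"
  let ?S = "S1 X1 DX1 V1 DV1 \<pi>1 Y f ft"
  let ?SM = "smooth_maps (X1 // ?rX) (quot_plots X1 DX1 ?rX) (V1 // ?rV) (quot_plots V1 DV1 ?rV)"
  have dX: "diffeology X1 DX1" and dV: "diffeology V1 DV1"
    using assms(1) unfolding pseudo_bundle_def by blast+
  have char: "?S s \<in> ?SM \<and> (\<forall>x\<in>X1. ?S s (?rX `` {x}) = ?rV `` {s x})" if "s \<in> ?IS" for s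
    using S1_char[OF assms(1) assms(3) that] .
  have eX: "equiv X1 ?rX" by (rule equiv_relX)
  show ?thesis
    unfolding smooth_def
  proof (intro conjI allI impI)
    show "?S ` ?IS \<subseteq> ?SM" using char by blast
    fix n U q assume "sub_plots (fun_plots X1 DX1 V1 DV1) ?IS n U q"
    then have fq: "fun_plots X1 DX1 V1 DV1 n U q" and qU: "q ` U \<subseteq> ?IS"
      unfolding sub_plots_def by blast+
    have fqd: "domain n U" and fqp: "\<And>m U' p. DX1 m U' p \<Longrightarrow>
        DV1 (n + m) (prod_dom n U m U') (\<lambda>z. q (pr1 n z) (p (pr2 n z)))"
      using fq unfolding fun_plots_def by blast+
    show "fun_plots (X1 // ?rX) (quot_plots X1 DX1 ?rX) (V1 // ?rV) (quot_plots V1 DV1 ?rV) n U (?S \<circ> q)"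
      unfolding fun_plots_def
    proof (intro conjI allI impI)
      show "domain n U" by (rule fqd)
      show "(?S \<circ> q) ` U \<subseteq> ?SM"
      proof
        fix y assume "y \<in> (?S \<circ> q) ` U"
        then obtain u where u: "u \<in> U" and y: "y = ?S (q u)" by auto
        have "q u \<in> ?IS" using qU u by blast
        then show "y \<in> ?SM" using char y by blast
      qed
      fix m U' p assume pp: "quot_plots X1 DX1 ?rX m U' p"
      have pdom: "domain m U'" and pU: "p ` U' \<subseteq> X1 // ?rX"
        and ploc: "\<And>u. u \<in> U' \<Longrightarrow> \<exists>W q. u \<in> W \<and> W \<subseteq> U' \<and> domain m W \<and> DX1 m W q \<and> (\<forall>w\<in>W. p w = ?rX `` {q w})"
        using pp unfolding quot_plots_def by blast+
      let ?D = "prod_dom n U m U'"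
      show "quot_plots V1 DV1 ?rV (n + m) ?D (\<lambda>z. (?S \<circ> q) (pr1 n z) (p (pr2 n z)))"
        unfolding quot_plots_def
      proof (intro conjI ballI)
        show "domain (n + m) ?D"
        proof (cases "X1 = {}")
          case True
          then have "U' = {}" using pU by (auto simp: quotient_def)
          then have "?D = {}" unfolding prod_dom_def by auto
          then show ?thesis unfolding domain_def by simp
        next
          case False
          then obtain c where c: "c \<in> X1" by blast
          have "DX1 m U' (\<lambda>_. c)" using dX pdom c by (rule diff_const)
          then show ?thesis using dV fqp by (blast intro: diff_dom)
        qed
        show "(\<lambda>z. (?S \<circ> q) (pr1 n z) (p (pr2 n z))) ` ?D \<subseteq> V1 // ?rV"
        proof
          fix y assume "y \<in> (\<lambda>z. (?S \<circ> q) (pr1 n z) (p (pr2 n z))) ` ?D"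
          then obtain z where z: "z \<in> ?D" and y: "y = ?S (q (pr1 n z)) (p (pr2 n z))" by auto
          have q1: "q (pr1 n z) \<in> ?IS" using z qU unfolding prod_dom_def by auto
          have "p (pr2 n z) \<in> X1 // ?rX" using z pU unfolding prod_dom_def by auto
          then show "y \<in> V1 // ?rV" using char[OF q1] y unfolding smooth_maps_def smooth_def by blast
        qed
        fix z assume z: "z \<in> ?D"
        then have z2: "pr2 n z \<in> U'" and z1: "pr1 n z \<in> U" and zR: "z \<in> Rn (n + m)"
          unfolding prod_dom_def by auto
        obtain W qq where W: "pr2 n z \<in> W" "W \<subseteq> U'" "domain m W" "DX1 m W qq"
          and pq: "\<forall>w\<in>W. p w = ?rX `` {qq w}" using ploc[OF z2] by blast
        have qqX: "qq ` W \<subseteq> X1" using dX W(4) by (rule diff_img)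
        let ?W = "prod_dom n U m W"
        have Wp: "DV1 (n + m) ?W (\<lambda>z. q (pr1 n z) (qq (pr2 n z)))" using fqp W(4) .
        have "z \<in> ?W" using z1 zR W(1) unfolding prod_dom_def by auto
        moreover have "?W \<subseteq> ?D" using W(2) unfolding prod_dom_def by auto
        moreover have "domain (n + m) ?W" using dV Wp by (rule diff_dom)
        moreover have "\<forall>w\<in>?W. (\<lambda>z. (?S \<circ> q) (pr1 n z) (p (pr2 n z))) w
             = ?rV `` {(\<lambda>z. q (pr1 n z) (qq (pr2 n z))) w}"
        proof
          fix w assume w: "w \<in> ?W"
          then have w1: "pr1 n w \<in> U" and w2: "pr2 n w \<in> W" unfolding prod_dom_def by auto
          have q1: "q (pr1 n w) \<in> ?IS" using w1 qU by auto
          have "qq (pr2 n w) \<in> X1" using qqX w2 by auto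
          then show "(\<lambda>z. (?S \<circ> q) (pr1 n z) (p (pr2 n z))) w
             = ?rV `` {(\<lambda>z. q (pr1 n z) (qq (pr2 n z))) w}"
            using char[OF q1] pq w2 \<open>qq (pr2 n w) \<in> X1\<close> by simp
        qed
        ultimately show "\<exists>W qa. z \<in> W \<and> W \<subseteq> ?D \<and> domain (n + m) W \<and> DV1 (n + m) W qa \<and>
             (\<forall>w\<in>W. (\<lambda>z. (?S \<circ> q) (pr1 n z) (p (pr2 n z))) w = ?rV `` {qa w})"
          using Wp by blast
      qed
    qed
  qed
qed

end
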